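(* Let $\mathsf{T}$ be a quantifier-free set theory extending $\mathsf{MLS}$ (its literals include all $\mathsf{MLS}$ literals, in particular membership literals $x\in y$ between set variables). Suppose $\mathsf{T}$ contains a conjunction of literals $\varphi$ with a designated variable $\bar x$ such that, for some integer $k\ge2$: every set assignment satisfying $\varphi$ assigns to $\bar x$ a set of cardinality at most $k$, and some set assignment satisfying $\varphi$ assigns to $\bar x$ a set of cardinality exactly $k$. Then $\mathsf{T}$ is not convex.
   Context: $\mathsf{MLS}$ is the quantifier-free propositional closure of atoms $x=\varnothing$, $x=y$, $x\subseteq y$, $x\in y$, $x=y\setminus z$, $x=y\cup z$, $x=y\cap z$ over set variables, interpreted by set assignments, i.e. maps from finitely many set variables into the von Neumann universe, with the usual meaning of the symbols. A theory of this kind is convex if for every conjunction of its literals $\psi$ and every finite nonempty set $\mathcal{E}$ of equalities between variables, whenever every set assignment satisfying $\psi$ satisfies $\bigvee\mathcal{E}$, there is some $x=y$ in $\mathcal{E}$ satisfied by every set assignment satisfying $\psi$. *)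

theory Defs
  imports Main
begin

definition set_universe :: "('v \<Rightarrow> 'v \<Rightarrow> bool) \<Rightarrow> bool" where
  "set_universe mem \<longleftrightarrow>
     (\<forall>a b. (\<forall>z. mem z a \<longleftrightarrow> mem z b) \<longrightarrow> a = b) \<and> wfP mem"

definition elems :: "('v \<Rightarrow> 'v \<Rightarrow> bool) \<Rightarrow> 'v \<Rightarrow> 'v set" where
  "elems mem s = {z. mem z s}"

datatype 'x mls_atom =
    EmptyA 'x
  | EqA 'x 'x
  | SubA 'x 'x
  | MemA 'x 'x
  | DiffA 'x 'x 'x
  | UnA 'x 'x 'x
  | IntA 'x 'x 'x

datatype 'x mls_lit = Pos "'x mls_atom" | Neg "'x mls_atom"

fun mls_atom_holds :: "('v \<Rightarrow> 'v \<Rightarrow> bool) \<Rightarrow> ('x \<Rightarrow> 'v) \<Rightarrow> 'x mls_atom \<Rightarrow> bool" where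
  "mls_atom_holds mem \<sigma> (EmptyA x) = (\<forall>z. \<not> mem z (\<sigma> x))"
| "mls_atom_holds mem \<sigma> (EqA x y) = (\<sigma> x = \<sigma> y)"
| "mls_atom_holds mem \<sigma> (SubA x y) = (\<forall>z. mem z (\<sigma> x) \<longrightarrow> mem z (\<sigma> y))"
| "mls_atom_holds mem \<sigma> (MemA x y) = mem (\<sigma> x) (\<sigma> y)"
| "mls_atom_holds mem \<sigma> (DiffA x y w) = (\<forall>z. mem z (\<sigma> x) \<longleftrightarrow> mem z (\<sigma> y) \<and> \<not> mem z (\<sigma> w))"
| "mls_atom_holds mem \<sigma> (UnA x y w) = (\<forall>z. mem z (\<sigma> x) \<longleftrightarrow> mem z (\<sigma> y) \<or> mem z (\<sigma> w))"
| "mls_atom_holds mem \<sigma> (IntA x y w) = (\<forall>z. mem z (\<sigma> x) \<longleftrightarrow> mem z (\<sigma> y) \<and> mem z (\<sigma> w))"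

fun mls_lit_holds :: "('v \<Rightarrow> 'v \<Rightarrow> bool) \<Rightarrow> ('x \<Rightarrow> 'v) \<Rightarrow> 'x mls_lit \<Rightarrow> bool" where
  "mls_lit_holds mem \<sigma> (Pos a) = mls_atom_holds mem \<sigma> a"
| "mls_lit_holds mem \<sigma> (Neg a) = (\<not> mls_atom_holds mem \<sigma> a)"

fun mls_atom_vars :: "'x mls_atom \<Rightarrow> 'x set" where
  "mls_atom_vars (EmptyA x) = {x}"
| "mls_atom_vars (EqA x y) = {x, y}"
| "mls_atom_vars (SubA x y) = {x, y}"
| "mls_atom_vars (MemA x y) = {x, y}"
| "mls_atom_vars (DiffA x y w) = {x, y, w}"
| "mls_atom_vars (UnA x y w) = {x, y, w}"
| "mls_atom_vars (IntA x y w) = {x, y, w}"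

fun mls_lit_vars :: "'x mls_lit \<Rightarrow> 'x set" where
  "mls_lit_vars (Pos a) = mls_atom_vars a"
| "mls_lit_vars (Neg a) = mls_atom_vars a"

text \<open>A quantifier-free theory: a type of literals 'lit over variables 'var, with a
  satisfaction relation holds (assignment, literal) and the finite set of variables of
  each literal; satisfaction of a literal depends only on the values of its variables.\<close>

definition qf_theory :: "(('var \<Rightarrow> 'v) \<Rightarrow> 'lit \<Rightarrow> bool) \<Rightarrow> ('lit \<Rightarrow> 'var set) \<Rightarrow> bool" where
  "qf_theory holds vars \<longleftrightarrow>
     (\<forall>l. finite (vars l)) \<and>
     (\<forall>l \<sigma> \<tau>. (\<forall>x\<in>vars l. \<sigma> x = \<tau> x) \<longrightarrow> holds \<sigma> l = holds \<tau> l)"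

definition extends_MLS ::
  "('v \<Rightarrow> 'v \<Rightarrow> bool) \<Rightarrow> (('var \<Rightarrow> 'v) \<Rightarrow> 'lit \<Rightarrow> bool) \<Rightarrow> ('lit \<Rightarrow> 'var set)
     \<Rightarrow> ('var mls_lit \<Rightarrow> 'lit) \<Rightarrow> bool" where
  "extends_MLS mem holds vars emb \<longleftrightarrow>
     (\<forall>l \<sigma>. holds \<sigma> (emb l) = mls_lit_holds mem \<sigma> l) \<and>
     (\<forall>l. vars (emb l) = mls_lit_vars l)"

definition sat :: "(('var \<Rightarrow> 'v) \<Rightarrow> 'lit \<Rightarrow> bool) \<Rightarrow> ('var \<Rightarrow> 'v) \<Rightarrow> 'lit list \<Rightarrow> bool" where
  "sat holds \<sigma> \<phi> \<longleftrightarrow> (\<forall>l\<in>set \<phi>. holds \<sigma> l)"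

definition convex :: "(('var \<Rightarrow> 'v) \<Rightarrow> 'lit \<Rightarrow> bool) \<Rightarrow> bool" where
  "convex holds \<longleftrightarrow>
     (\<forall>(\<psi> :: 'lit list) (E :: ('var \<times> 'var) set).
        finite E \<and> E \<noteq> {} \<and>
        (\<forall>\<sigma>. sat holds \<sigma> \<psi> \<longrightarrow> (\<exists>(x, y)\<in>E. \<sigma> x = \<sigma> y)) \<longrightarrow>
        (\<exists>(x, y)\<in>E. \<forall>\<sigma>. sat holds \<sigma> \<psi> \<longrightarrow> \<sigma> x = \<sigma> y))"

end

theory Submission
  imports Defs
begin

theorem lemma13:
  fixes mem :: "'v \<Rightarrow> 'v \<Rightarrow> bool"
    and holds :: "('var \<Rightarrow> 'v) \<Rightarrow> 'lit \<Rightarrow> bool"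
    and vars :: "'lit \<Rightarrow> 'var set"
    and emb :: "'var mls_lit \<Rightarrow> 'lit"
    and \<phi> :: "'lit list"
    and xbar :: 'var
    and k :: nat
  assumes "set_universe mem"
    and "infinite (UNIV :: 'var set)"
    and "qf_theory holds vars"
    and "extends_MLS mem holds vars emb"
    and "k \<ge> 2"
    and "\<forall>\<sigma>. sat holds \<sigma> \<phi> \<longrightarrow> finite (elems mem (\<sigma> xbar)) \<and> card (elems mem (\<sigma> xbar)) \<le> k"
    and "\<exists>\<sigma>. sat holds \<sigma> \<phi> \<and> finite (elems mem (\<sigma> xbar)) \<and> card (elems mem (\<sigma> xbar)) = k"
  shows "\<not> convex holds"
proof
  assume cv: "convex holds"
  define F where "F = (\<Union>l\<in>set \<phi>. vars l) \<union> {xbar}"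
  have finF: "finite F" using assms(3) unfolding F_def qf_theory_def by auto
  have "infinite (UNIV - F)" using assms(2) finF by auto
  then obtain y :: "nat \<Rightarrow> 'var" where yinj: "inj y" and yr: "range y \<subseteq> UNIV - F"
    using infinite_countable_subset by blast
  have emb_holds: "\<And>l \<sigma>. holds \<sigma> (emb l) = mls_lit_holds mem \<sigma> l"
    using assms(4) unfolding extends_MLS_def by auto
  define \<psi> where "\<psi> = \<phi> @ map (\<lambda>i. emb (Pos (MemA (y i) xbar))) [0..<Suc k]"
  define E where "E = {(y i, y j) | i j. i < j \<and> j \<le> k}"
  have setm: "set (map (\<lambda>i. emb (Pos (MemA (y i) xbar))) [0..<Suc k]) = (\<lambda>i. emb (Pos (MemA (y i) xbar))) ` {..k}"
    by (auto simp: atLeast0LessThan lessThan_Suc_atMost simp del: upt_Suc)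
  have satpsi: "sat holds \<sigma> \<psi> \<longleftrightarrow> sat holds \<sigma> \<phi> \<and> (\<forall>i\<le>k. mem (\<sigma> (y i)) (\<sigma> xbar))" for \<sigma>
  proof -
    have "sat holds \<sigma> \<psi> \<longleftrightarrow> sat holds \<sigma> \<phi> \<and> (\<forall>i\<in>{..k}. holds \<sigma> (emb (Pos (MemA (y i) xbar))))"
      unfolding \<psi>_def sat_def set_append setm by blast
    also have "\<dots> \<longleftrightarrow> sat holds \<sigma> \<phi> \<and> (\<forall>i\<le>k. mem (\<sigma> (y i)) (\<sigma> xbar))"
      by (auto simp: emb_holds)
    finally show ?thesis .
  qed
  have finE: "finite E"
  proof -
    have "E \<subseteq> (\<lambda>(i,j). (y i, y j)) ` ({..k} \<times> {..k})" unfolding E_def by auto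
    then show ?thesis by (rule finite_subset) auto
  qed
  have neE: "E \<noteq> {}" unfolding E_def using assms(5) by force
  have c1: "\<forall>\<sigma>. sat holds \<sigma> \<psi> \<longrightarrow> (\<exists>(a, b)\<in>E. \<sigma> a = \<sigma> b)"
  proof (intro allI impI)
    fix \<sigma> assume s: "sat holds \<sigma> \<psi>"
    hence s1: "sat holds \<sigma> \<phi>" and s2: "\<forall>i\<le>k. mem (\<sigma> (y i)) (\<sigma> xbar)" using satpsi by auto
    have fin: "finite (elems mem (\<sigma> xbar))" and ck: "card (elems mem (\<sigma> xbar)) \<le> k"
      using assms(6) s1 by auto
    have sub: "(\<sigma> \<circ> y) ` {..k} \<subseteq> elems mem (\<sigma> xbar)" using s2 by (auto simp: elems_def)
    have "\<not> inj_on (\<sigma> \<circ> y) {..k}"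
    proof
      assume "inj_on (\<sigma> \<circ> y) {..k}"
      from card_inj_on_le[OF this sub fin] ck show False by simp
    qed
    then obtain i j where ij: "i \<le> k" "j \<le> k" "i \<noteq> j" "\<sigma> (y i) = \<sigma> (y j)"
      unfolding inj_on_def by auto
    show "\<exists>(a, b)\<in>E. \<sigma> a = \<sigma> b"
    proof (cases "i < j")
      case True then show ?thesis using ij unfolding E_def by force
    next
      case False then have "j < i" using ij by simp
      then show ?thesis using ij unfolding E_def by force
    qed
  qed
  from cv[unfolded convex_def, rule_format, OF conjI[OF finE conjI[OF neE c1]]]
  obtain i j where ij: "i < j" "j \<le> k" and all: "\<forall>\<sigma>. sat holds \<sigma> \<psi> \<longrightarrow> \<sigma> (y i) = \<sigma> (y j)"
    unfolding E_def by blast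
  obtain \<sigma>0 where s0: "sat holds \<sigma>0 \<phi>" "finite (elems mem (\<sigma>0 xbar))" "card (elems mem (\<sigma>0 xbar)) = k"
    using assms(7) by blast
  have "2 \<le> card (elems mem (\<sigma>0 xbar))" using s0 assms(5) by simp
  then obtain a b where ab: "a \<in> elems mem (\<sigma>0 xbar)" "b \<in> elems mem (\<sigma>0 xbar)" "a \<noteq> b"
    by (metis One_nat_def card_le_Suc0_iff_eq not_less_eq_eq numeral_2_eq_2 s0(2))
  define \<sigma> where "\<sigma> v = (if v = y j then b else if v \<in> range y then a else \<sigma>0 v)" for v
  have agree: "\<sigma> v = \<sigma>0 v" if "v \<in> F" for v using that yr unfolding \<sigma>_def by auto
  have "sat holds \<sigma> \<phi>"
    unfolding sat_def
  proof
    fix l assume l: "l \<in> set \<phi>"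
    have "\<forall>v\<in>vars l. \<sigma> v = \<sigma>0 v" using agree l F_def by auto
    then have "holds \<sigma> l = holds \<sigma>0 l" using assms(3) unfolding qf_theory_def by blast
    then show "holds \<sigma> l" using s0(1) l unfolding sat_def by auto
  qed
  moreover have "\<sigma> xbar = \<sigma>0 xbar" using agree F_def by auto
  moreover have "\<forall>m\<le>k. mem (\<sigma> (y m)) (\<sigma>0 xbar)" using ab unfolding \<sigma>_def elems_def by auto
  ultimately have "sat holds \<sigma> \<psi>" using satpsi by auto
  with all have "\<sigma> (y i) = \<sigma> (y j)" by blast
  moreover have "\<sigma> (y i) = a" using ij yinj unfolding \<sigma>_def by (auto dest: injD)
  moreover have "\<sigma> (y j) = b" unfolding \<sigma>_def by simp
  ultimately show False using ab by simp
qed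

end
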